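(* For every $r\ge 3$ and all integers $3\le k_0\le k_1\le \cdots \le k_{r-1}$, \[ S(r;k_0,\dots,k_{r-1}) \ge \Bigl(\prod_{j=2}^{r-1}k_j\Bigr)S(2;k_0,k_1) -\sum_{i=2}^{r-1}\prod_{j=i+1}^{r-1}k_j \] (empty product equal to $1$). In particular, if $4\le s\le t\le k_2\le \cdots \le k_{r-1}$, then \[ S(r;s,t,k_2,\dots,k_{r-1}) \ge \Bigl(\prod_{j=2}^{r-1}k_j\Bigr)(st-t-1) -\sum_{i=2}^{r-1}\prod_{j=i+1}^{r-1}k_j. \]
   Context: For an integer $k\ge 3$, let $\mathcal{L}(k)$ denote the equation $x_1+x_2+\cdots+x_{k-1}=x_k$ in positive integer variables (the $x_i$ need not be distinct). For $N\ge1$, write $[1,N]=\{1,2,\dots,N\}$. For integers $r\ge1$ and $k_0,\dots,k_{r-1}\ge 3$, the generalized Schur number $S(r;k_0,\dots,k_{r-1})$ is the least positive integer $N$ such that for every coloring $\Delta:[1,N]\to\{0,1,\dots,r-1\}$ there exist some $i\in\{0,\dots,r-1\}$ and positive integers $x_1,\dots,x_{k_i}\in[1,N]$ satisfying $\mathcal{L}(k_i)$ with $\Delta(x_1)=\cdots=\Delta(x_{k_i})=i$. *)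

theory Defs
  imports Main
begin

definition mono_sol :: "nat \<Rightarrow> (nat \<Rightarrow> nat) \<Rightarrow> nat \<Rightarrow> nat \<Rightarrow> bool" where
  "mono_sol N \<Delta> i k \<longleftrightarrow>
     (\<exists>x :: nat \<Rightarrow> nat. (\<forall>j\<in>{1..k}. x j \<in> {1..N} \<and> \<Delta> (x j) = i)
                         \<and> (\<Sum>j=1..k-1. x j) = x k)"

definition schur_prop :: "nat \<Rightarrow> (nat \<Rightarrow> nat) \<Rightarrow> nat \<Rightarrow> bool" where
  "schur_prop r k N \<longleftrightarrow>
     (\<forall>\<Delta> :: nat \<Rightarrow> nat. (\<forall>x\<in>{1..N}. \<Delta> x < r) \<longrightarrow> (\<exists>i<r. mono_sol N \<Delta> i (k i)))"

text \<open>Generalized Schur number S(r; k_0, ..., k_{r-1}); only k 0, ..., k (r-1) matter.\<close>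
definition schur :: "nat \<Rightarrow> (nat \<Rightarrow> nat) \<Rightarrow> nat" where
  "schur r k = (LEAST N. 1 \<le> N \<and> schur_prop r k N)"

end

theory Submission
  imports Defs "HOL-Library.Ramsey"
begin


lemma telesc:
  fixes hs :: "nat list"
  assumes "sorted hs" "m < length hs"
  shows "(\<Sum>j=1..m. hs!j - hs!(j-1)) = hs!m - hs!0"
  using assms(2)
proof (induction m)
  case 0 then show ?case by simp
next
  case (Suc m)
  have a: "hs!0 \<le> hs!m" "hs!m \<le> hs!(Suc m)" using Suc.prems sorted_nth_mono[OF assms(1)] by auto
  have "(\<Sum>j=1..Suc m. hs!j - hs!(j-1)) = (\<Sum>j=1..m. hs!j - hs!(j-1)) + (hs!(Suc m) - hs!m)"
    by simp
  also have "\<dots> = hs!m - hs!0 + (hs!(Suc m) - hs!m)" using Suc by simp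
  finally show ?case using a by simp
qed

lemma exists_schur:
  assumes "\<forall>i<r. 2 \<le> k i"
  shows "\<exists>N. 1 \<le> N \<and> schur_prop r k N"
proof -
  obtain R :: nat where R: "partn_lst {..<R} (map k [0..<r]) 2" using ramsey_full[of "map k [0..<r]" 2] by blast
  have "schur_prop r k (R+1)" unfolding schur_prop_def
  proof (intro allI impI)
    fix \<Delta> :: "nat \<Rightarrow> nat" assume D: "\<forall>x\<in>{1..R+1}. \<Delta> x < r"
    define f where "f = (\<lambda>S::nat set. \<Delta> (Max S - Min S))"
    have pair: "Max {a,b} - Min {a,b} = b - a" if "a < b" for a b :: nat
      using that by (simp add: max_def min_def)
    have f: "f \<in> nsets {..<R} 2 \<rightarrow> {..<r}"
    proof
      fix S assume "S \<in> nsets {..<R} 2"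
      then obtain a b where S: "S = {a,b}" "a < b" "b < R"
        by (auto simp: nsets_def card_2_iff) (metis insert_commute linorder_neqE_nat)
      have "b - a \<in> {1..R+1}" using S by auto
      then show "f S \<in> {..<r}" using D pair[OF S(2)] S(1) by (auto simp: f_def)
    qed
    obtain i H where iH: "i < length (map k [0..<r])" "H \<in> nsets {..<R} ((map k [0..<r])!i)"
      "f ` (nsets H 2) \<subseteq> {i}"
      using partn_lstE[OF R f, of thesis] by simp
    have ir: "i < r" and kH: "H \<subseteq> {..<R}" "finite H" "card H = k i"
      using iH by (auto simp: nsets_def)
    define q where "q = k i"
    have q2: "2 \<le> q" using assms ir q_def by auto
    define hs where "hs = sorted_list_of_set H"
    have hs: "sorted hs" "distinct hs" "length hs = q" "set hs = H"
      using kH by (auto simp: hs_def q_def)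
    have key: "\<Delta> (hs!b - hs!a) = i \<and> hs!b - hs!a \<in> {1..R+1}" if ab: "a < b" "b < q" for a b
    proof -
      have lt: "hs!a < hs!b"
        using hs ab sorted_nth_mono[OF hs(1), of a b] nth_eq_iff_index_eq[OF hs(2), of a b]
        by (simp add: order_le_neq_trans)
      have inH: "hs!a \<in> H" "hs!b \<in> H" using hs ab nth_mem[of a hs] nth_mem[of b hs] by auto
      have "{hs!a, hs!b} \<in> nsets H 2" using lt inH by simp
      then have "f {hs!a, hs!b} = i" using iH(3) by blast
      then have "\<Delta> (hs!b - hs!a) = i" using pair[OF lt] by (simp add: f_def)
      moreover have "hs!b < R" using inH kH by auto
      ultimately show ?thesis using lt by auto
    qed
    define x where "x = (\<lambda>j. if j < q then hs!j - hs!(j-1) else hs!(q-1) - hs!0)"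
    have xok: "\<forall>j\<in>{1..q}. x j \<in> {1..R+1} \<and> \<Delta> (x j) = i"
    proof
      fix j assume j: "j \<in> {1..q}"
      show "x j \<in> {1..R+1} \<and> \<Delta> (x j) = i"
      proof (cases "j < q")
        case True then show ?thesis using key[of "j-1" j] j by (simp add: x_def)
      next
        case False then show ?thesis using key[of 0 "q-1"] j q2 by (simp add: x_def)
      qed
    qed
    have "(\<Sum>j=1..q-1. x j) = (\<Sum>j=1..q-1. hs!j - hs!(j-1))"
      by (rule sum.cong) (auto simp: x_def)
    also have "\<dots> = hs!(q-1) - hs!0" using telesc[OF hs(1), of "q-1"] hs q2 by simp
    also have "\<dots> = x q" by (simp add: x_def)
    finally have "mono_sol (R+1) \<Delta> i (k i)" unfolding mono_sol_def using xok q_def by blast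
    then show "\<exists>i<r. mono_sol (R+1) \<Delta> i (k i)" using ir by blast
  qed
  then show ?thesis by auto
qed



definition good :: "nat \<Rightarrow> (nat \<Rightarrow> nat) \<Rightarrow> nat \<Rightarrow> (nat \<Rightarrow> nat) \<Rightarrow> bool" where
  "good r k M \<Delta> \<longleftrightarrow> (\<forall>x\<in>{1..M}. \<Delta> x < r) \<and> (\<forall>i<r. \<not> mono_sol M \<Delta> i (k i))"

lemma mono_sol_mono: "mono_sol N \<Delta> i q \<Longrightarrow> N \<le> M \<Longrightarrow> mono_sol M \<Delta> i q"
  unfolding mono_sol_def by (meson atLeastAtMost_iff order_trans)

lemma schur_gt:
  assumes "\<forall>i<r. 2 \<le> k i" "good r k M \<Delta>"
  shows "M < schur r k"
proof (rule ccontr)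
  assume "\<not> M < schur r k"
  then have le: "schur r k \<le> M" by simp
  have "1 \<le> schur r k \<and> schur_prop r k (schur r k)"
    unfolding schur_def using exists_schur[OF assms(1)] by (rule LeastI_ex)
  then obtain i where "i < r" "mono_sol (schur r k) \<Delta> i (k i)"
    using assms(2) le unfolding schur_prop_def good_def by force
  then show False using mono_sol_mono[OF _ le] assms(2) unfolding good_def by blast
qed

lemma schur_good:
  assumes "\<forall>i<r. 2 \<le> k i"
  shows "\<exists>\<Delta>. good r k (schur r k - 1) \<Delta>"
proof (cases "schur r k - 1 = 0")
  case True
  have "good r k 0 (\<lambda>_. 0)" unfolding good_def mono_sol_def using assms by force
  then show ?thesis using True by metis
next
  case False
  then have "schur r k - 1 < schur r k" by simp
  then have "\<not> (1 \<le> schur r k - 1 \<and> schur_prop r k (schur r k - 1))"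
    unfolding schur_def by (rule not_less_Least)
  then show ?thesis using False unfolding schur_prop_def good_def by auto
qed

lemma sum_ge: "(\<forall>j\<in>{1..q-1}. L \<le> (x j::nat)) \<Longrightarrow> (q-1)*L \<le> (\<Sum>j=1..q-1. x j)"
  using sum_bounded_below[of "{1..q-1}" L x] by simp

lemma sum_le: "(\<forall>j\<in>{1..q-1}. (x j::nat) \<le> U) \<Longrightarrow> (\<Sum>j=1..q-1. x j) \<le> (q-1)*U"
  using sum_bounded_above[of "{1..q-1}" x U] by simp

lemma step:
  assumes good: "good r k m \<Delta>" and K: "2 \<le> k r" and kle: "\<forall>i<r. k i \<le> k r"
    and k1: "\<forall>i<r. 1 \<le> k i"
  shows "good (Suc r) k (k r * (m+1) - 2)
     (\<lambda>x. if x \<le> m then \<Delta> x else if x \<le> (k r - 1)*(m+1) - 1 then r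
          else \<Delta> (x - ((k r - 1)*(m+1) - 1)))"
    (is "good _ _ ?M ?D")
proof -
  define K where "K = k r"
  define c where "c = (K - 1)*(m+1) - 1"
  have c1: "c + 1 = (K-1)*(m+1)" using K by (simp add: c_def K_def)
  have "1*(m+1) \<le> (K-1)*(m+1)" using K unfolding K_def by (intro mult_right_mono) auto
  then have cm: "m \<le> c" using c1 by simp
  have M: "?M = c + m" using c1 K unfolding K_def by (simp add: algebra_simps)
  define Dc where "Dc = (\<lambda>x. if x \<le> m then \<Delta> x else if x \<le> c then r else \<Delta> (x - c))"
  have D: "?D = Dc"
    unfolding Dc_def c_def K_def by (rule refl)
  have rng: "\<forall>x\<in>{1..?M}. Dc x < Suc r"
  proof
    fix x assume x: "x \<in> {1..?M}"
    show "Dc x < Suc r"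
    proof (cases "x \<le> m")
      case True then have "x \<in> {1..m}" using x by auto
      then have "\<Delta> x < r" using good unfolding good_def by blast
      then show ?thesis using True Dc_def by simp
    next
      case False
      show ?thesis
      proof (cases "x \<le> c")
        case True then show ?thesis using Dc_def False by simp
      next
        case F2: False
        then have "x - c \<in> {1..m}" using x M by auto
        then have "\<Delta> (x - c) < r" using good unfolding good_def by blast
        then show ?thesis using Dc_def False F2 by simp
      qed
    qed
  qed
  have nr: "\<not> mono_sol ?M Dc r (k r)"
  proof
    assume "mono_sol ?M Dc r (k r)"
    then obtain x where x: "\<forall>j\<in>{1..K}. x j \<in> {1..?M} \<and> Dc (x j) = r"
      and s: "(\<Sum>j=1..K-1. x j) = x K" unfolding mono_sol_def K_def by blast
    have mid: "m < x j \<and> x j \<le> c" if "j \<in> {1..K}" for j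
    proof -
      have "Dc (x j) = r" "x j \<in> {1..?M}" using x that by auto
      have g: "\<forall>y\<in>{1..m}. \<Delta> y < r" using good unfolding good_def by blast
      show ?thesis
      proof (cases "x j \<le> m")
        case True then show ?thesis using g \<open>Dc (x j) = r\<close> \<open>x j \<in> {1..?M}\<close> Dc_def by auto
      next
        case False
        show ?thesis
        proof (rule ccontr)
          assume "\<not> (m < x j \<and> x j \<le> c)"
          then have "c < x j" using False by simp
          then have "x j - c \<in> {1..m}" "\<Delta> (x j - c) = r"
            using \<open>Dc (x j) = r\<close> \<open>x j \<in> {1..?M}\<close> Dc_def M False by auto
          then show False using g by fastforce
        qed
      qed
    qed
    have "(K-1)*(m+1) \<le> (\<Sum>j=1..K-1. x j)"
      by (intro sum_ge) (metis One_nat_def Suc_eq_plus1 Suc_leI atLeastAtMost_iff diff_le_self le_trans mid)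
    then show False using s c1 mid[of K] K K_def by auto
  qed
  have ni: "\<not> mono_sol ?M Dc i (k i)" if ir: "i < r" for i
  proof
    assume "mono_sol ?M Dc i (k i)"
    define q where "q = k i"
    obtain x where x: "\<forall>j\<in>{1..q}. x j \<in> {1..?M} \<and> Dc (x j) = i"
      and s: "(\<Sum>j=1..q-1. x j) = x q" unfolding q_def using \<open>mono_sol ?M Dc i (k i)\<close>
      unfolding mono_sol_def by blast
    have q1: "1 \<le> q" "q \<le> K" using k1 kle ir q_def K_def by auto
    have lowhigh: "x j \<le> m \<or> (c < x j \<and> x j \<le> c + m \<and> \<Delta> (x j - c) = i)" 
      and lowc: "x j \<le> m \<Longrightarrow> \<Delta> (x j) = i" if "j \<in> {1..q}" for j
      using x that Dc_def M ir by (auto split: if_splits)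
    have le_s: "x j \<le> x q" if "j \<in> {1..q-1}" for j
      using member_le_sum[of j "{1..q-1}" x] that s by simp
    show False
    proof (cases "x q \<le> m")
      case True
      have "\<forall>j\<in>{1..q}. x j \<in> {1..m} \<and> \<Delta> (x j) = i"
      proof
        fix j assume j: "j \<in> {1..q}"
        have "x j \<le> x q" using le_s[of j] j by (cases "j = q") auto
        then show "x j \<in> {1..m} \<and> \<Delta> (x j) = i" using True x j lowc by auto
      qed
      then have "mono_sol m \<Delta> i (k i)" using s unfolding mono_sol_def q_def by blast
      then show False using good ir unfolding good_def by blast
    next
      case False
      then have xq: "c < x q" "x q \<le> c + m" "\<Delta> (x q - c) = i" using lowhigh[of q] q1 by auto
      show False
      proof (cases "\<exists>j1\<in>{1..q-1}. \<exists>j2\<in>{1..q-1}. j1 \<noteq> j2 \<and> m < x j1 \<and> m < x j2")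
        case True
        then obtain j1 j2 where j: "j1\<in>{1..q-1}" "j2\<in>{1..q-1}" "j1 \<noteq> j2" "m < x j1" "m < x j2"
          by blast
        have "c < x j1" "c < x j2" using lowhigh[of j1] lowhigh[of j2] j by auto
        moreover have "x j1 + x j2 \<le> (\<Sum>j=1..q-1. x j)"
          using sum_mono2[of "{1..q-1}" "{j1,j2}" x] j by auto
        ultimately show False using s xq cm by linarith
      next
        case F2: False
        show False
        proof (cases "\<exists>j0\<in>{1..q-1}. m < x j0")
          case False
          then have "(\<Sum>j=1..q-1. x j) \<le> (q-1)*m" by (intro sum_le) (auto simp: not_less)
          moreover have "(q-1)*m \<le> (K-1)*m" using q1 by auto
          moreover have "(K-1)*m < (K-1)*(m+1)" using K K_def by simp
          ultimately show False using s xq c1 by linarith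
        next
          case True
          then obtain j0 where j0: "j0\<in>{1..q-1}" "m < x j0" by blast
          have oth: "x j \<le> m" if "j\<in>{1..q-1}" "j \<noteq> j0" for j
            using F2 j0 that by (meson not_le)
          have hj0: "c < x j0" "x j0 \<le> c + m" "\<Delta> (x j0 - c) = i" using lowhigh[of j0] j0 by auto
          define y where "y = (\<lambda>j. if j = j0 \<or> j = q then x j - c else x j)"
          have fin: "finite {1..q-1}" by simp
          have "(\<Sum>j=1..q-1. x j) = x j0 + (\<Sum>j\<in>{1..q-1}-{j0}. x j)"
            using sum.remove[OF fin j0(1)] by simp
          moreover have "(\<Sum>j=1..q-1. y j) = y j0 + (\<Sum>j\<in>{1..q-1}-{j0}. y j)"
            using sum.remove[OF fin j0(1)] by simp
          moreover have "(\<Sum>j\<in>{1..q-1}-{j0}. y j) = (\<Sum>j\<in>{1..q-1}-{j0}. x j)"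
            by (rule sum.cong) (auto simp: y_def)
          moreover have "y j0 = x j0 - c" "y q = x q - c" using j0 by (auto simp: y_def)
          ultimately have sy: "(\<Sum>j=1..q-1. y j) = y q" using s hj0 xq by simp
          have "\<forall>j\<in>{1..q}. y j \<in> {1..m} \<and> \<Delta> (y j) = i"
          proof
            fix j assume j: "j \<in> {1..q}"
            show "y j \<in> {1..m} \<and> \<Delta> (y j) = i"
            proof (cases "j = j0 \<or> j = q")
              case True then show ?thesis using hj0 xq by (auto simp: y_def)
            next
              case False
              then have "j \<in> {1..q-1}" using j by auto
              then have "x j \<le> m" using oth False by blast
              then show ?thesis using False x j lowc by (auto simp: y_def)
            qed
          qed
          then have "mono_sol m \<Delta> i (k i)" using sy unfolding mono_sol_def q_def by blast
          then show False using good ir unfolding good_def by blast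
        qed
      qed
    qed
  qed
  show ?thesis unfolding D good_def using rng nr ni by (auto simp: less_Suc_eq)
qed



lemma schur_ge1:
  assumes "\<forall>i<r. 2 \<le> k i"
  shows "1 \<le> schur r k"
proof -
  have "1 \<le> schur r k \<and> schur_prop r k (schur r k)"
    unfolding schur_def using exists_schur[OF assms(1)] by (rule LeastI_ex)
  then show ?thesis by blast
qed

lemma base_good:
  assumes s3: "3 \<le> k 0" and st: "k 0 \<le> k 1"
  shows "good 2 k ((k 1 - 1)*(k 0 - 1) + k 0 - 3)
    (\<lambda>x. if x \<le> k 0 - 2 then 0 else if x \<le> (k 1 - 1)*(k 0 - 1) - 1 then 1 else 0)"
    (is "good _ _ ?M ?D")
proof -
  define s where "s = k 0"
  define t where "t = k 1"
  define a where "a = (t-1)*(s-1)"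
  have s3': "3 \<le> s" "s \<le> t" using assms s_def t_def by auto
  have aa: "(s-1)*(s-1) \<le> a" unfolding a_def using s3' by (intro mult_right_mono) auto
  have a2: "(s-1)*(s-2) < a" 
  proof -
    have "(s-1)*(s-2) < (s-1)*(s-1)" using s3' by simp
    then show ?thesis using aa by linarith
  qed
  have Mdef: "?M = a + s - 3" by (simp add: a_def s_def t_def)
  define Dc where "Dc = (\<lambda>x::nat. if x \<le> s - 2 then 0 else if x \<le> a - 1 then 1 else (0::nat))"
  have D: "?D = Dc" unfolding Dc_def a_def s_def t_def by (rule refl)
  have n0: "\<not> mono_sol (a + s - 3) Dc 0 s"
  proof
    assume "mono_sol (a + s - 3) Dc 0 s"
    then obtain x where x: "\<forall>j\<in>{1..s}. x j \<in> {1..a+s-3} \<and> Dc (x j) = 0"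
      and sm: "(\<Sum>j=1..s-1. x j) = x s" unfolding mono_sol_def by blast
    have lh: "x j \<le> s - 2 \<or> a \<le> x j" "1 \<le> x j" "x j \<le> a + s - 3" if "j \<in> {1..s}" for j
      using x that unfolding Dc_def by (auto split: if_splits)
    have "(s-1)*1 \<le> (\<Sum>j=1..s-1. x j)" using lh by (intro sum_ge) auto
    then have xs: "a \<le> x s" using lh[of s] sm s3' by auto
    show False
    proof (cases "\<exists>j0\<in>{1..s-1}. a \<le> x j0")
      case True
      then obtain j0 where j0: "j0\<in>{1..s-1}" "a \<le> x j0" by blast
      have fin: "finite {1..s-1}" by simp
      have "(\<Sum>j=1..s-1. x j) = x j0 + (\<Sum>j\<in>{1..s-1}-{j0}. x j)"
        using sum.remove[OF fin j0(1)] by simp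
      moreover have "card ({1..s-1}-{j0}) \<le> (\<Sum>j\<in>{1..s-1}-{j0}. x j)"
      proof -
        have "\<And>j. j \<in> {1..s-1}-{j0} \<Longrightarrow> 1 \<le> x j" using lh(2) by auto
        from sum_bounded_below[of "{1..s-1}-{j0}" 1 x, OF this] show ?thesis by simp
      qed
      moreover have "card ({1..s-1}-{j0}) = s - 2" using j0 by simp
      moreover have "s \<in> {1..s}" using s3' by auto
      ultimately show False using sm lh(3)[of s] j0(2) s3' by linarith
    next
      case False
      then have "(\<Sum>j=1..s-1. x j) \<le> (s-1)*(s-2)" using lh
        by (intro sum_le) (metis One_nat_def Suc_le_eq atLeastAtMost_iff diff_le_self le_trans not_le)
      then show False using sm xs a2 by linarith
    qed
  qed
  have n1: "\<not> mono_sol (a + s - 3) Dc 1 t"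
  proof
    assume "mono_sol (a + s - 3) Dc 1 t"
    then obtain x where x: "\<forall>j\<in>{1..t}. x j \<in> {1..a+s-3} \<and> Dc (x j) = 1"
      and sm: "(\<Sum>j=1..t-1. x j) = x t" unfolding mono_sol_def by blast
    have lh0: "s - 1 \<le> x j \<and> x j \<le> a - 1" if "j \<in> {1..t}" for j
    proof -
      have h: "Dc (x j) = 1" using x that by blast
      have n: "\<not> x j \<le> s-2"
      proof
        assume "x j \<le> s-2" then have "Dc (x j) = 0" by (simp add: Dc_def)
        with h show False by simp
      qed
      moreover have "x j \<le> a-1"
      proof (rule ccontr)
        assume "\<not> x j \<le> a-1" with n have "Dc (x j) = 0" by (simp add: Dc_def)
        with h show False by simp
      qed
      ultimately show ?thesis using s3' by linarith
    qed
    have lh: "s - 1 \<le> x j" "x j \<le> a - 1" if "j \<in> {1..t}" for j using lh0[OF that] by auto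
    have "\<forall>j\<in>{1..t-1}. s-1 \<le> x j" using lh(1) by auto
    then have "(t-1)*(s-1) \<le> (\<Sum>j=1..t-1. x j)" by (rule sum_ge)
    moreover have "(t-1)*(s-1) = a" by (simp add: a_def)
    moreover have "t \<in> {1..t}" using s3' by auto
    moreover have "0 < a" using a2 by linarith
    ultimately show False using sm lh(2)[of t] by linarith
  qed
  show ?thesis unfolding D Mdef good_def using n0 n1
    by (auto simp: Dc_def less_2_cases_iff s_def t_def)
qed



lemma schur2_lb:
  assumes "3 \<le> k 0" "k 0 \<le> k 1"
  shows "int (k 0) * int (k 1) - int (k 1) - 1 \<le> int (schur 2 k)"
proof -
  have k2: "\<forall>i<2. 2 \<le> k i" using assms less_2_cases_iff by auto
  have "(k 1 - 1)*(k 0 - 1) + k 0 - 3 < schur 2 k"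
    using schur_gt[OF k2 base_good[OF assms]] .
  then have "int ((k 1 - 1)*(k 0 - 1) + k 0 - 3) + 1 \<le> int (schur 2 k)" by linarith
  moreover have "int ((k 1 - 1)*(k 0 - 1) + k 0 - 3) = (int (k 1) - 1)*(int (k 0) - 1) + int (k 0) - 3"
    using assms by (simp add: of_nat_diff)
  ultimately show ?thesis by (simp add: algebra_simps)
qed

lemma main_ind:
  assumes k0: "3 \<le> k 0" and mono: "\<forall>i j. i \<le> j \<and> j < n+2 \<longrightarrow> k i \<le> k j"
  shows "int (schur (n+2) k) \<ge>
           (\<Prod>j=2..n+1. int (k j)) * int (schur 2 k)
           - (\<Sum>i=2..n+1. \<Prod>j=i+1..n+1. int (k j))"
  using mono
proof (induction n)
  case 0 then show ?case by (simp add: eval_nat_numeral)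
next
  case (Suc n)
  define r where "r = n + 2"
  have IH: "(\<Prod>j=2..n+1. int (k j)) * int (schur 2 k) - (\<Sum>i=2..n+1. \<Prod>j=i+1..n+1. int (k j))
      \<le> int (schur r k)" using Suc r_def by auto
  have kk: "\<forall>i<Suc r. 2 \<le> k i"
  proof (intro allI impI)
    fix i assume "i < Suc r" then have "k 0 \<le> k i" using Suc.prems r_def by auto
    then show "2 \<le> k i" using k0 by simp
  qed
  have kr: "\<forall>i<r. 2 \<le> k i" using kk by auto
  have kle: "\<forall>i<r. k i \<le> k r" using Suc.prems r_def by auto
  obtain \<Delta> where g: "good r k (schur r k - 1) \<Delta>" using schur_good[OF kr] by blast
  have s1: "1 \<le> schur r k" using schur_ge1[OF kr] .
  have "k r * (schur r k - 1 + 1) - 2 < schur (Suc r) k"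
  proof -
    have "2 \<le> k r" using kk by auto
    moreover have "\<forall>i<r. 1 \<le> k i" proof (intro allI impI)
      fix i assume "i < r" then have "2 \<le> k i" using kr by blast
      then show "1 \<le> k i" by simp
    qed
    ultimately show ?thesis using schur_gt[OF kk step[OF g _ kle]] by simp
  qed
  then have "k r * schur r k - 2 < schur (Suc r) k" using s1 by simp
  then have "int (k r * schur r k) - 1 \<le> int (schur (Suc r) k)" by linarith
  then have step1: "int (k r) * int (schur r k) - 1 \<le> int (schur (Suc r) k)" by simp
  have P: "(\<Prod>j=2..Suc n+1. int (k j)) = (\<Prod>j=2..n+1. int (k j)) * int (k r)"
    by (simp add: r_def)
  have Q: "(\<Prod>j=i+1..Suc n+1. int (k j)) = (\<Prod>j=i+1..n+1. int (k j)) * int (k r)"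
    if "i \<in> {2..n+1}" for i using that by (simp add: r_def)
  have "(\<Sum>i=2..Suc n+1. \<Prod>j=i+1..Suc n+1. int (k j))
      = (\<Sum>i=2..n+1. \<Prod>j=i+1..Suc n+1. int (k j)) + 1" by simp
  also have "(\<Sum>i=2..n+1. \<Prod>j=i+1..Suc n+1. int (k j)) = (\<Sum>i=2..n+1. (\<Prod>j=i+1..n+1. int (k j)) * int (k r))"
    by (rule sum.cong[OF refl Q])
  also have "\<dots> = (\<Sum>i=2..n+1. \<Prod>j=i+1..n+1. int (k j)) * int (k r)"
    by (simp only: sum_distrib_right)
  finally have S: "(\<Sum>i=2..Suc n+1. \<Prod>j=i+1..Suc n+1. int (k j))
      = (\<Sum>i=2..n+1. \<Prod>j=i+1..n+1. int (k j)) * int (k r) + 1" .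
  have "int (k r) * ((\<Prod>j=2..n+1. int (k j)) * int (schur 2 k) - (\<Sum>i=2..n+1. \<Prod>j=i+1..n+1. int (k j)))
      \<le> int (k r) * int (schur r k)" using IH by (intro mult_left_mono) auto
  then show ?case unfolding P S using step1 by (simp add: r_def algebra_simps)
qed


theorem corollary1:
  fixes r :: nat and k :: "nat \<Rightarrow> nat"
  assumes "3 \<le> r" and "3 \<le> k 0"
    and "\<forall>i j. i \<le> j \<and> j < r \<longrightarrow> k i \<le> k j"
  shows "int (schur r k) \<ge>
           (\<Prod>j=2..r-1. int (k j)) * int (schur 2 k)
           - (\<Sum>i=2..r-1. \<Prod>j=i+1..r-1. int (k j))
         \<and> (4 \<le> k 0 \<longrightarrow>
            int (schur r k) \<ge>
              (\<Prod>j=2..r-1. int (k j)) * (int (k 0) * int (k 1) - int (k 1) - 1)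
              - (\<Sum>i=2..r-1. \<Prod>j=i+1..r-1. int (k j)))"
proof -
  obtain n where n: "r = n + 2" using assms(1) by (metis add.commute le_Suc_ex le_trans numeral_le_iff semiring_norm(72) one_le_numeral numeral_One)
  have r1: "r - 1 = n + 1" using n by simp
  have m: "\<forall>i j. i \<le> j \<and> j < n+2 \<longrightarrow> k i \<le> k j" using assms(3) n by simp
  have part1: "(\<Prod>j=2..r-1. int (k j)) * int (schur 2 k) - (\<Sum>i=2..r-1. \<Prod>j=i+1..r-1. int (k j))
      \<le> int (schur r k)"
    unfolding r1 using main_ind[OF assms(2) m] n by simp
  have part2: "(\<Prod>j=2..r-1. int (k j)) * (int (k 0) * int (k 1) - int (k 1) - 1)
              - (\<Sum>i=2..r-1. \<Prod>j=i+1..r-1. int (k j)) \<le> int (schur r k)"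
  proof -
    have "k 0 \<le> k 1" using assms(3) n by auto
    then have lb: "int (k 0) * int (k 1) - int (k 1) - 1 \<le> int (schur 2 k)"
      using schur2_lb assms(2) by blast
    have "0 \<le> (\<Prod>j=2..r-1. int (k j))" by (intro prod_nonneg) auto
    then have "(\<Prod>j=2..r-1. int (k j)) * (int (k 0) * int (k 1) - int (k 1) - 1)
       \<le> (\<Prod>j=2..r-1. int (k j)) * int (schur 2 k)" by (rule mult_left_mono[OF lb])
    then show ?thesis using part1 by linarith
  qed
  show ?thesis using part1 part2 by simp
qed

end
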